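(* Let $\mathcal H$ be a complex Hilbert space, let $a \in (\tfrac12, \infty) \setminus \{1\}$, and let $X, Y$ be finite-dimensional subspaces of $\mathcal H$ with $S_a(X,Y) \ne \emptyset$. Then there exists $k \in \mathbb N \cup \{0\}$, $k \le \dim \mathcal H$, such that $\dim X = \dim Y = k$ and $\dim Z = k$ for every $Z \in S_a(X,Y)$.
   Context: For a closed subspace $X$ of $\mathcal H$, $P_X$ is the orthogonal projection onto $X$. For finite-dimensional subspaces $X,Y$ and $a\in\mathbb R$, $S_a(X,Y)$ denotes the set of all finite-dimensional subspaces $Z$ of $\mathcal H$ such that $a(P_X+P_Y)+(1-2a)P_Z$ is a finite-rank (self-adjoint, idempotent) projection. *)

theory Defs
  imports "HOL-Analysis.Analysis"
begin

class complex_vector = real_vector +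
  fixes scaleC :: "complex \<Rightarrow> 'a \<Rightarrow> 'a" (infixr \<open>*\<^sub>C\<close> 75)
  assumes scaleC_add_right: "c *\<^sub>C (x + y) = c *\<^sub>C x + c *\<^sub>C y"
    and scaleC_add_left: "(c + d) *\<^sub>C x = c *\<^sub>C x + d *\<^sub>C x"
    and scaleC_scaleC: "c *\<^sub>C (d *\<^sub>C x) = (c * d) *\<^sub>C x"
    and scaleC_one: "1 *\<^sub>C x = x"
    and scaleR_scaleC: "scaleR r = scaleC (complex_of_real r)"

interpretation cvs: vector_space "scaleC :: complex \<Rightarrow> 'a::complex_vector \<Rightarrow> 'a"
  by unfold_locales (simp_all add: scaleC_add_right scaleC_add_left scaleC_scaleC scaleC_one)

class complex_inner = complex_vector + real_normed_vector +
  fixes cinner :: "'a \<Rightarrow> 'a \<Rightarrow> complex"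
  assumes cinner_commute: "cinner x y = cnj (cinner y x)"
    and cinner_add_left: "cinner (x + y) z = cinner x z + cinner y z"
    and cinner_scaleC_left: "cinner (c *\<^sub>C x) y = cnj c * cinner x y"
    and cinner_self_real: "cinner x x = complex_of_real (Re (cinner x x))"
    and cinner_ge_zero: "0 \<le> Re (cinner x x)"
    and cinner_eq_zero_iff: "cinner x x = 0 \<longleftrightarrow> x = 0"
    and norm_eq_sqrt_cinner: "norm x = sqrt (Re (cinner x x))"

text \<open>A complex Hilbert space is then a type of sort {complex_inner, complete_space}.\<close>

definition fd_subspace :: "'a::complex_vector set \<Rightarrow> bool" where
  "fd_subspace X \<longleftrightarrow> cvs.subspace X \<and> (\<exists>B. finite B \<and> X = cvs.span B)"

abbreviation cdim :: "'a::complex_vector set \<Rightarrow> nat" where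
  "cdim X \<equiv> cvs.dim X"

definition orthproj :: "'a::complex_inner set \<Rightarrow> 'a \<Rightarrow> 'a" where
  "orthproj X x = (THE p. p \<in> X \<and> (\<forall>y\<in>X. cinner y (x - p) = 0))"

definition fr_projection :: "('a::complex_inner \<Rightarrow> 'a) \<Rightarrow> bool" where
  "fr_projection T \<longleftrightarrow> T \<circ> T = T \<and> (\<forall>x y. cinner (T x) y = cinner x (T y))
     \<and> fd_subspace (range T)"

definition S_a :: "real \<Rightarrow> 'a::complex_inner set \<Rightarrow> 'a set \<Rightarrow> 'a set set" where
  "S_a a X Y = {Z. fd_subspace Z \<and>
     fr_projection (\<lambda>x. complex_of_real a *\<^sub>C (orthproj X x + orthproj Y x)
                        + complex_of_real (1 - 2 * a) *\<^sub>C orthproj Z x)}"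

end

theory Submission
  imports Defs
begin

interpretation cvp: vector_space_pair "scaleC::complex\<Rightarrow>'a::complex_vector\<Rightarrow>'a" "scaleC::complex\<Rightarrow>'b::complex_vector\<Rightarrow>'b"
  by unfold_locales

definition clin :: "('a::complex_vector \<Rightarrow> 'a) \<Rightarrow> bool" where
  "clin f \<longleftrightarrow> (\<forall>x y. f (x + y) = f x + f y) \<and> (\<forall>c x. f (c *\<^sub>C x) = c *\<^sub>C f x)"

lemma clin_linear: "clin f \<Longrightarrow> Vector_Spaces.linear (*\<^sub>C) (*\<^sub>C) f"
  unfolding clin_def Vector_Spaces.linear_iff
  using cvs.vector_space_axioms by blast

lemma cinner_add_right: "cinner x (y + z) = cinner x y + cinner x z"
  by (metis cinner_commute cinner_add_left complex_cnj_add)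
lemma cinner_scaleC_right: "cinner x (c *\<^sub>C y) = c * cinner x y"
  by (metis cinner_commute cinner_scaleC_left complex_cnj_cnj complex_cnj_mult)
lemma cinner_zero_left[simp]: "cinner 0 x = 0"
  by (metis add_0 cinner_add_left add_cancel_left_left)
lemma cinner_zero_right[simp]: "cinner x 0 = 0"
  by (metis cinner_commute cinner_zero_left complex_cnj_zero)
lemma cinner_minus_left: "cinner (- x) y = - cinner x y"
  by (metis add_eq_0_iff cinner_add_left cinner_zero_left neg_eq_iff_add_eq_0)
lemma cinner_minus_right: "cinner x (- y) = - cinner x y"
  by (metis cinner_commute cinner_minus_left complex_cnj_minus)
lemma cinner_diff_left: "cinner (x - y) z = cinner x z - cinner y z"
  using cinner_add_left[of x "- y" z] by (simp add: cinner_minus_left)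
lemma cinner_diff_right: "cinner x (y - z) = cinner x y - cinner x z"
  using cinner_add_right[of x y "- z"] by (simp add: cinner_minus_right)
lemma cinner_scaleR_left: "cinner (r *\<^sub>R x) y = complex_of_real r * cinner x y"
  by (simp add: scaleR_scaleC cinner_scaleC_left)
lemma cinner_scaleR_right: "cinner x (r *\<^sub>R y) = complex_of_real r * cinner x y"
  by (simp add: scaleR_scaleC cinner_scaleC_right)

lemmas cinner_simps = cinner_add_left cinner_add_right cinner_diff_left cinner_diff_right
  cinner_minus_left cinner_minus_right cinner_scaleR_left cinner_scaleR_right

definition nn :: "'a::complex_inner \<Rightarrow> real" where "nn x = Re (cinner x x)"

lemma nn_ge0: "0 \<le> nn x" by (simp add: nn_def cinner_ge_zero)
lemma nn_eq0: "nn x = 0 \<longleftrightarrow> x = 0"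
  by (metis cinner_eq_zero_iff cinner_self_real nn_def zero_complex.simps(1) of_real_0)
lemma cinner_self_nn: "cinner x x = complex_of_real (nn x)"
  by (metis cinner_self_real nn_def)
lemma Re_cinner_sym: "Re (cinner x y) = Re (cinner y x)"
  by (subst cinner_commute) simp

lemma nn_add: "nn (x + y) = nn x + nn y + 2 * Re (cinner x y)"
  unfolding nn_def by (simp add: cinner_simps Re_cinner_sym[of y x])
lemma nn_diff: "nn (x - y) = nn x + nn y - 2 * Re (cinner x y)"
  unfolding nn_def by (simp add: cinner_simps Re_cinner_sym[of y x])
lemma nn_scaleR: "nn (r *\<^sub>R x) = r^2 * nn x"
  unfolding nn_def by (simp add: cinner_simps power2_eq_square)

lemma cinner_scaleC_left': "cinner (c *\<^sub>C x) y = cnj c * cinner x y" by (rule cinner_scaleC_left)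

lemma proj_exists_span:
  assumes "finite B"
  shows "\<exists>p\<in>cvs.span B. \<forall>y\<in>cvs.span B. cinner y (x - p) = 0"
  using assms
proof (induction B arbitrary: x rule: finite_induct)
  case empty
  then show ?case by (auto simp: cvs.span_empty)
next
  case (insert v B)
  have "\<forall>x. \<exists>p. p \<in> cvs.span B \<and> (\<forall>y\<in>cvs.span B. cinner y (x - p) = 0)"
    using insert.IH by blast
  then obtain pB where pB: "\<And>x. pB x \<in> cvs.span B" "\<And>x y. y \<in> cvs.span B \<Longrightarrow> cinner y (x - pB x) = 0"
    by metis
  define w where "w = v - pB v"
  show ?case
  proof (cases "w = 0")
    case True
    then have "v \<in> cvs.span B" using pB(1)[of v] unfolding w_def by simp
    then have "cvs.span (insert v B) = cvs.span B" by (rule cvs.span_redundant)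
    then show ?thesis using insert.IH by simp
  next
    case False
    define \<alpha> where "\<alpha> = cinner w x / cinner w w"
    have ww: "cinner w w \<noteq> 0" using False cinner_eq_zero_iff by blast
    have wspan: "w \<in> cvs.span (insert v B)"
      unfolding w_def
      by (meson cvs.span_base cvs.span_diff cvs.span_mono insertI1 pB(1) subsetD subset_insertI)
    have "pB x + \<alpha> *\<^sub>C w \<in> cvs.span (insert v B)"
      by (meson cvs.span_add cvs.span_mono cvs.span_scale pB(1) subsetD subset_insertI wspan)
    moreover have "cinner y (x - (pB x + \<alpha> *\<^sub>C w)) = 0" if y: "y \<in> cvs.span (insert v B)" for y
    proof -
      obtain k where k: "y - k *\<^sub>C v \<in> cvs.span B" using y cvs.span_insert by blast
      define u where "u = y - k *\<^sub>C v + k *\<^sub>C pB v"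
      have u: "u \<in> cvs.span B" unfolding u_def
        by (simp add: cvs.span_add cvs.span_scale k pB(1))
      have yu: "y = u + k *\<^sub>C w" unfolding u_def w_def
        by (simp add: cvs.scale_right_diff_distrib)
      have uw: "cinner u w = 0" using pB(2)[OF u, of v] w_def by simp
      have ux: "cinner u (x - pB x) = 0" using pB(2)[OF u] by simp
      have wp: "cinner w (pB x) = 0"
        using pB(2)[OF pB(1)[of x], of v] cinner_commute[of w "pB x"] w_def by simp
      have "cinner w (x - (pB x + \<alpha> *\<^sub>C w)) = cinner w x - cinner w (pB x) - \<alpha> * cinner w w"
        by (simp add: cinner_diff_right cinner_add_right cinner_scaleC_right)
      also have "\<dots> = 0" using wp ww by (simp add: \<alpha>_def)
      finally have 1: "cinner w (x - (pB x + \<alpha> *\<^sub>C w)) = 0" .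
      have "cinner u (x - (pB x + \<alpha> *\<^sub>C w)) = cinner u (x - pB x) - \<alpha> * cinner u w"
        by (simp add: cinner_diff_right cinner_add_right cinner_scaleC_right algebra_simps)
      then have 2: "cinner u (x - (pB x + \<alpha> *\<^sub>C w)) = 0" using ux uw by simp
      show ?thesis unfolding yu using 1 2 by (simp add: cinner_add_left cinner_scaleC_left)
    qed
    ultimately show ?thesis by blast
  qed
qed


lemma orth_unique:
  assumes "cvs.subspace X" "p \<in> X" "q \<in> X" "\<forall>y\<in>X. cinner y (x - p) = 0" "\<forall>y\<in>X. cinner y (x - q) = 0"
  shows "p = q"
proof -
  have d: "p - q \<in> X" using assms cvs.subspace_diff by blast
  have "cinner (p - q) (p - q) = cinner (p - q) (x - q) - cinner (p - q) (x - p)"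
    by (simp add: cinner_diff_right)
  also have "\<dots> = 0" using assms(4,5) d by simp
  finally have "p - q = 0" using cinner_eq_zero_iff by blast
  then show ?thesis by simp
qed

lemma orthproj_char:
  assumes "fd_subspace X" "p \<in> X" "\<forall>y\<in>X. cinner y (x - p) = 0"
  shows "orthproj X x = p"
  unfolding orthproj_def
proof (rule the_equality)
  show "p \<in> X \<and> (\<forall>y\<in>X. cinner y (x - p) = 0)" using assms by blast
  show "\<And>q. q \<in> X \<and> (\<forall>y\<in>X. cinner y (x - q) = 0) \<Longrightarrow> q = p"
    using orth_unique assms fd_subspace_def by blast
qed

lemma orthproj_props:
  assumes "fd_subspace X"
  shows "orthproj X x \<in> X \<and> (\<forall>y\<in>X. cinner y (x - orthproj X x) = 0)"
proof -
  obtain B where B: "finite B" "X = cvs.span B" using assms fd_subspace_def by blast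
  obtain p where "p \<in> X" "\<forall>y\<in>X. cinner y (x - p) = 0" using proj_exists_span[OF B(1)] B(2) by blast
  then show ?thesis using orthproj_char[OF assms] by simp
qed

lemma orthproj_in: "fd_subspace X \<Longrightarrow> orthproj X x \<in> X"
  using orthproj_props by blast
lemma orthproj_orth: "fd_subspace X \<Longrightarrow> y \<in> X \<Longrightarrow> cinner y (x - orthproj X x) = 0"
  using orthproj_props by blast
lemma orthproj_id: "fd_subspace X \<Longrightarrow> x \<in> X \<Longrightarrow> orthproj X x = x"
  using orthproj_char[of X x x] by simp
lemma orthproj_idem: "fd_subspace X \<Longrightarrow> orthproj X (orthproj X x) = orthproj X x"
  by (simp add: orthproj_id orthproj_in)

lemma orthproj_add: assumes "fd_subspace X"
  shows "orthproj X (x + y) = orthproj X x + orthproj X y"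
proof (rule orthproj_char[OF assms])
  have s: "cvs.subspace X" using assms fd_subspace_def by blast
  show "orthproj X x + orthproj X y \<in> X" using s orthproj_in[OF assms] cvs.subspace_add by blast
  show "\<forall>z\<in>X. cinner z (x + y - (orthproj X x + orthproj X y)) = 0"
  proof
    fix z assume z: "z \<in> X"
    have "x + y - (orthproj X x + orthproj X y) = (x - orthproj X x) + (y - orthproj X y)" by simp
    then show "cinner z (x + y - (orthproj X x + orthproj X y)) = 0"
      using orthproj_orth[OF assms z, of x] orthproj_orth[OF assms z, of y] by (simp only: cinner_add_right) simp
  qed
qed

lemma orthproj_scaleC: assumes "fd_subspace X"
  shows "orthproj X (c *\<^sub>C x) = c *\<^sub>C orthproj X x"
proof (rule orthproj_char[OF assms])
  have s: "cvs.subspace X" using assms fd_subspace_def by blast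
  show "c *\<^sub>C orthproj X x \<in> X" using s orthproj_in[OF assms] cvs.subspace_scale by blast
  show "\<forall>z\<in>X. cinner z (c *\<^sub>C x - c *\<^sub>C orthproj X x) = 0"
  proof
    fix z assume z: "z \<in> X"
    have "c *\<^sub>C x - c *\<^sub>C orthproj X x = c *\<^sub>C (x - orthproj X x)" by (simp add: cvs.scale_right_diff_distrib)
    then show "cinner z (c *\<^sub>C x - c *\<^sub>C orthproj X x) = 0"
      using orthproj_orth[OF assms z] by (simp add: cinner_scaleC_right)
  qed
qed

lemma orthproj_scaleR: "fd_subspace X \<Longrightarrow> orthproj X (r *\<^sub>R x) = r *\<^sub>R orthproj X x"
  by (simp add: scaleR_scaleC orthproj_scaleC)

lemma orthproj_diff: "fd_subspace X \<Longrightarrow> orthproj X (x - y) = orthproj X x - orthproj X y"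
  by (metis orthproj_add diff_add_cancel eq_diff_eq)

lemma clin_orthproj: "fd_subspace X \<Longrightarrow> clin (orthproj X)"
  by (simp add: clin_def orthproj_add orthproj_scaleC)

lemma orthproj_cinner_self: assumes "fd_subspace X"
  shows "cinner (orthproj X x) y = cinner (orthproj X x) (orthproj X y)"
proof -
  have "cinner (orthproj X x) (y - orthproj X y) = 0" using orthproj_orth[OF assms orthproj_in[OF assms]] .
  then show ?thesis by (simp add: cinner_diff_right)
qed

lemma orthproj_adj: assumes "fd_subspace X"
  shows "cinner (orthproj X x) y = cinner x (orthproj X y)"
proof -
  have "cinner x (orthproj X y) = cnj (cinner (orthproj X y) x)" by (rule cinner_commute)
  also have "\<dots> = cnj (cinner (orthproj X y) (orthproj X x))" using orthproj_cinner_self[OF assms] by simp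
  also have "\<dots> = cinner (orthproj X x) (orthproj X y)" by (metis cinner_commute)
  finally show ?thesis using orthproj_cinner_self[OF assms] by simp
qed

lemma orthproj_zero_iff: assumes "fd_subspace X"
  shows "orthproj X x = 0 \<longleftrightarrow> (\<forall>y\<in>X. cinner y x = 0)"
proof
  assume "orthproj X x = 0" then show "\<forall>y\<in>X. cinner y x = 0" using orthproj_orth[OF assms, of _ x] by simp
next
  assume "\<forall>y\<in>X. cinner y x = 0"
  moreover have "0 \<in> X" using assms fd_subspace_def cvs.subspace_0 by blast
  ultimately show "orthproj X x = 0" using orthproj_char[OF assms, of 0 x] by simp
qed

lemma Re_proj: assumes "fd_subspace X"
  shows "Re (cinner x (orthproj X x)) = nn (orthproj X x)"
    and "Re (cinner (orthproj X x) x) = nn (orthproj X x)"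
proof -
  have "Re (cinner (orthproj X x) x) = nn (orthproj X x)"
    using orthproj_cinner_self[OF assms, of x x] by (simp add: nn_def)
  then show "Re (cinner x (orthproj X x)) = nn (orthproj X x)" "Re (cinner (orthproj X x) x) = nn (orthproj X x)"
    using Re_cinner_sym by metis+
qed

lemma nn_proj_le: assumes "fd_subspace X" shows "nn (orthproj X x) \<le> nn x"
proof -
  have "nn x = nn (orthproj X x) + nn (x - orthproj X x)"
    using nn_diff[of x "orthproj X x"] Re_proj[OF assms, of x] by (simp add: nn_diff)
  then show ?thesis using nn_ge0[of "x - orthproj X x"] by linarith
qed


lemma fd_sub:
  assumes "fd_subspace A" "cvs.subspace S" "S \<subseteq> A"
  shows "fd_subspace S"
proof -
  obtain C where C: "finite C" "A = cvs.span C" using assms(1) fd_subspace_def by blast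
  obtain B where B: "B \<subseteq> S" "cvs.independent B" "S \<subseteq> cvs.span B" "card B = cdim S"
    by (rule cvs.basis_exists)
  have "B \<subseteq> cvs.span C" using B(1) assms(3) C(2) by simp
  then have fB: "finite B" using cvs.independent_span_bound[OF C(1) B(2)] by simp
  have "cvs.span B \<subseteq> S" using cvs.span_minimal[OF B(1) assms(2)] .
  then have "S = cvs.span B" using B(3) by blast
  then show ?thesis using fB assms(2) fd_subspace_def by blast
qed


lemma dim_inj_le:
  assumes A: "fd_subspace A" and B: "fd_subspace B" and f: "clin f"
    and img: "\<And>x. x \<in> A \<Longrightarrow> f x \<in> B"
    and inj: "\<And>x. x \<in> A \<Longrightarrow> f x = 0 \<Longrightarrow> x = 0"
  shows "cdim A \<le> cdim B"
proof -
  have lin: "Vector_Spaces.linear (*\<^sub>C) (*\<^sub>C) f" using f by (rule clin_linear)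
  have sA: "cvs.subspace A" using A unfolding fd_subspace_def by simp
  obtain BA where BA: "BA \<subseteq> A" "cvs.independent BA" "A \<subseteq> cvs.span BA" "card BA = cdim A"
    by (rule cvs.basis_exists)
  have spA: "cvs.span BA = A" using cvs.span_minimal[OF BA(1) sA] BA(3) by (rule antisym)
  have injA: "inj_on f A"
  proof (rule inj_onI)
    fix x y assume xy: "x \<in> A" "y \<in> A" "f x = f y"
    then have "f (x - y) = 0" using cvp.linear_diff[OF lin, of x y] by simp
    moreover have "x - y \<in> A" using cvs.subspace_diff[OF sA xy(1,2)] .
    ultimately have "x - y = 0" by (rule inj[rotated])
    then show "x = y" by simp
  qed
  have ind: "cvs.independent (f ` BA)"
    using cvp.linear_independent_injective_image[OF lin BA(2)] injA spA by simp
  obtain CB where CB: "CB \<subseteq> B" "cvs.independent CB" "B \<subseteq> cvs.span CB" "card CB = cdim B"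
    by (rule cvs.basis_exists)
  obtain C where C: "finite C" "B = cvs.span C" using assms(2) unfolding fd_subspace_def by auto
  have "CB \<subseteq> cvs.span C" using CB(1) C(2) by simp
  then have fCB: "finite CB" using cvs.independent_span_bound[OF C(1) CB(2)] by simp
  have "f ` BA \<subseteq> B" using BA(1) img by auto
  then have "f ` BA \<subseteq> cvs.span CB" using CB(3) by (rule order_trans)
  then have "card (f ` BA) \<le> card CB" using cvs.independent_span_bound[OF fCB ind] by simp
  moreover have "card (f ` BA) = card BA" using inj_on_subset[OF injA BA(1)] by (rule card_image)
  ultimately show ?thesis using BA(4) CB(4) by simp
qed


lemma nn_lin2: "nn (r *\<^sub>R u + s *\<^sub>R v) = r^2 * nn u + s^2 * nn v + 2 * r * s * Re (cinner u v)"
  by (simp add: nn_add nn_scaleR cinner_scaleR_left cinner_scaleR_right)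

lemma Re_cinner_scaleR_right: "Re (cinner x (r *\<^sub>R y)) = r * Re (cinner x y)"
  by (simp add: cinner_scaleR_right)

lemma pair_le:
  assumes fV: "fd_subspace V" and fZ: "fd_subspace Z" and D: "clin D"
    and maps: "\<And>x. x \<in> Z \<Longrightarrow> orthproj V x = 0 \<Longrightarrow> D x \<in> V \<and> orthproj Z (D x) = 0"
    and injD: "\<And>x. x \<in> Z \<Longrightarrow> orthproj V x = 0 \<Longrightarrow> D x = 0 \<Longrightarrow> x = 0"
  shows "cdim Z \<le> cdim V"
proof -
  define W where "W = {z\<in>Z. orthproj V z = 0}"
  have sZ: "cvs.subspace Z" using fZ unfolding fd_subspace_def by simp
  have sV: "cvs.subspace V" using fV unfolding fd_subspace_def by simp
  have sW: "cvs.subspace W"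
    unfolding cvs.subspace_def W_def
    using sZ orthproj_add[OF fV] orthproj_scaleC[OF fV] orthproj_scaleC[OF fV, of 0 0]
    by (simp add: cvs.subspace_0 cvs.subspace_add cvs.subspace_scale)
  have fW: "fd_subspace W" using fd_sub[OF fZ sW] W_def by blast
  define F where "F = (\<lambda>z. orthproj V z + D (orthproj W z))"
  have cF: "clin F"
    using D unfolding clin_def F_def
    by (simp add: orthproj_add[OF fV] orthproj_add[OF fW] orthproj_scaleC[OF fV] orthproj_scaleC[OF fW]
        cvs.scale_right_distrib)
  show ?thesis
  proof (rule dim_inj_le[OF fZ fV cF])
    fix z assume z: "z \<in> Z"
    have "orthproj W z \<in> W" by (rule orthproj_in[OF fW])
    then have "D (orthproj W z) \<in> V" using maps W_def by blast
    then show "F z \<in> V" unfolding F_def using cvs.subspace_add[OF sV orthproj_in[OF fV]] by blast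
  next
    fix z assume z: "z \<in> Z" and F0: "F z = 0"
    define w where "w = D (orthproj W z)"
    have Wz: "orthproj W z \<in> W" by (rule orthproj_in[OF fW])
    have w: "w \<in> V" "orthproj Z w = 0" using maps Wz W_def w_def by auto
    have "cinner z w = 0" using w(2) orthproj_zero_iff[OF fZ] z by blast
    then have wz: "cinner w z = 0" by (metis cinner_commute complex_cnj_zero)
    have "cinner w (orthproj V z) = cinner (orthproj V w) z" by (rule orthproj_adj[OF fV, symmetric])
    also have "\<dots> = 0" using orthproj_id[OF fV w(1)] wz by simp
    finally have wu: "cinner w (orthproj V z) = 0" .
    have u: "orthproj V z = - w" using F0 unfolding F_def w_def by (simp add: eq_neg_iff_add_eq_0)
    have "cinner w w = 0" using wu u by (simp add: cinner_minus_right)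
    then have w0: "w = 0" using cinner_eq_zero_iff by blast
    then have "orthproj V z = 0" using u by simp
    then have zW: "z \<in> W" using z W_def by blast
    then have "D z = 0" using w0 w_def orthproj_id[OF fW zW] by simp
    then show "z = 0" using injD z zW W_def by blast
  qed
qed


locale proj4 =
  fixes X Y Z V :: "'a::complex_inner set" and a :: real
  assumes fX: "fd_subspace X" and fY: "fd_subspace Y" and fZ: "fd_subspace Z" and fV: "fd_subspace V"
    and a_gt: "a > 1/2" and a_ne: "a \<noteq> 1"
    and ident: "\<And>x. orthproj V x = a *\<^sub>R (orthproj X x + orthproj Y x) + (1 - 2 * a) *\<^sub>R orthproj Z x"
begin

abbreviation "P \<equiv> orthproj X"
abbreviation "Q \<equiv> orthproj Y"
abbreviation "R \<equiv> orthproj Z"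
abbreviation "T \<equiv> orthproj V"

lemma star: "nn (T x) = a * (nn (P x) + nn (Q x)) + (1 - 2 * a) * nn (R x)"
proof -
  have "nn (T x) = Re (cinner x (T x))" using Re_proj(1)[OF fV] by simp
  also have "\<dots> = a * (Re (cinner x (P x)) + Re (cinner x (Q x))) + (1 - 2 * a) * Re (cinner x (R x))"
    by (subst ident) (simp add: cinner_add_right cinner_scaleR_right)
  finally show ?thesis by (simp add: Re_proj(1)[OF fX] Re_proj(1)[OF fY] Re_proj(1)[OF fZ])
qed

lemma XY_inj: assumes x: "x \<in> X" and q: "Q x = 0" shows "x = 0"
proof -
  have Tx: "T x = a *\<^sub>R x + (1 - 2 * a) *\<^sub>R R x" using ident[of x] orthproj_id[OF fX x] q by simp
  have 1: "nn (T x) = a * nn x + (1 - 2 * a) * nn (R x)"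
    using star[of x] orthproj_id[OF fX x] q by (simp add: nn_def)
  have "nn (T x) = a^2 * nn x + (1 - 2 * a)^2 * nn (R x) + 2 * a * (1 - 2 * a) * nn (R x)"
    unfolding Tx nn_lin2 using Re_proj(1)[OF fZ, of x] by simp
  then have "a * (1 - a) * nn x = 0" using 1 by (simp add: algebra_simps power2_eq_square)
  moreover have "a * (1 - a) \<noteq> 0" using a_gt a_ne by simp
  ultimately have "nn x = 0" by simp
  then show ?thesis using nn_eq0 by blast
qed

lemma P_proj_coef:
  assumes "P u + Q u = s *\<^sub>R u"
  shows "P (P u - Q u) + Q (P u - Q u) = (2 - s) *\<^sub>R (P u - Q u)"
proof -
  have "P (P u + Q u) = s *\<^sub>R P u" using assms orthproj_scaleR[OF fX] by simp
  then have 1: "P (Q u) = (s - 1) *\<^sub>R P u"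
    by (simp add: orthproj_add[OF fX] orthproj_idem[OF fX] algebra_simps)
  have "Q (P u + Q u) = s *\<^sub>R Q u" using assms orthproj_scaleR[OF fY] by simp
  then have 2: "Q (P u) = (s - 1) *\<^sub>R Q u"
    by (simp add: orthproj_add[OF fY] orthproj_idem[OF fY] algebra_simps)
  show ?thesis
    by (simp add: orthproj_diff[OF fX] orthproj_diff[OF fY] orthproj_idem[OF fX] orthproj_idem[OF fY] 1 2 algebra_simps scaleR_2)
qed

lemma PQ_inj:
  assumes "P u + Q u = s *\<^sub>R u" "P u - Q u = 0" "0 < s" "s < 2"
  shows "u = 0"
proof -
  have Pu: "P u = (s/2) *\<^sub>R u"
  proof -
    have "2 *\<^sub>R P u = s *\<^sub>R u" using assms(1,2) by (simp add: scaleR_2)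
    then show ?thesis by (metis divide_inverse_commute inverse_eq_divide real_scaleR_def scaleR_scaleR zero_neq_numeral mult.commute scaleR_one divide_self_if)
  qed
  have "nn (P u) = Re (cinner u (P u))" using Re_proj(1)[OF fX, of u] by simp
  also have "\<dots> = (s/2) * nn u" unfolding Pu by (simp add: cinner_scaleR_right nn_def)
  finally have "nn (P u) = (s/2) * nn u" .
  moreover have "nn (P u) = (s/2)^2 * nn u" using Pu nn_scaleR by simp
  ultimately have "(s/2) * (1 - s/2) * nn u = 0" by (simp add: algebra_simps power2_eq_square)
  moreover have "(s/2) * (1 - s/2) \<noteq> 0" using assms(3,4) by simp
  ultimately have "nn u = 0" by simp
  then show ?thesis using nn_eq0 by blast
qed

lemma eig1:
  assumes "P y + Q y = (1/a) *\<^sub>R y"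
  shows "y \<in> V \<and> R y = 0"
proof -
  have a0: "a \<noteq> 0" using a_gt by simp
  have Ty: "T y = y + (1 - 2 * a) *\<^sub>R R y" using ident[of y] assms a0 by simp
  have "nn (P y) + nn (Q y) = Re (cinner y (P y + Q y))"
    by (simp add: cinner_add_right Re_proj(1)[OF fX] Re_proj(1)[OF fY])
  also have "\<dots> = (1/a) * nn y" using assms by (simp add: Re_cinner_scaleR_right nn_def)
  finally have s: "nn (P y) + nn (Q y) = (1/a) * nn y" .
  have 1: "nn (T y) = nn y + (1 - 2 * a) * nn (R y)" using star[of y] s a0 by simp
  have "nn (T y) = nn y + (1 - 2 * a)^2 * nn (R y) + 2 * (1 - 2 * a) * nn (R y)"
    using nn_lin2[of 1 y "1 - 2 * a" "R y"] Ty Re_proj(1)[OF fZ, of y] by simp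
  then have "(1 - 2 * a) * (2 - 2 * a) * nn (R y) = 0" using 1 by (simp add: algebra_simps power2_eq_square)
  moreover have "(1 - 2 * a) * (2 - 2 * a) \<noteq> 0" using a_gt a_ne by simp
  ultimately have "nn (R y) = 0" by simp
  then have R0: "R y = 0" using nn_eq0 by blast
  then have "T y = y" using Ty by simp
  then show ?thesis using R0 orthproj_in[OF fV, of y] by simp
qed

lemma eig2:
  assumes "P w + Q w = ((2 * a - 1) / a) *\<^sub>R w"
  shows "w \<in> Z \<and> T w = 0"
proof -
  define b where "b = 2 * a - 1"
  have a0: "a \<noteq> 0" using a_gt by simp
  have aa: "a *\<^sub>R (((2 * a - 1) / a) *\<^sub>R w) = (2 * a - 1) *\<^sub>R w" using a0 by simp
  have Tw: "T w = b *\<^sub>R w - b *\<^sub>R R w" using ident[of w] assms aa unfolding b_def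
    by (simp add: algebra_simps)
  have "nn (P w) + nn (Q w) = Re (cinner w (P w + Q w))"
    by (simp add: cinner_add_right Re_proj(1)[OF fX] Re_proj(1)[OF fY])
  also have "\<dots> = (b / a) * nn w" using assms unfolding b_def by (simp add: Re_cinner_scaleR_right nn_def)
  finally have s: "nn (P w) + nn (Q w) = (b / a) * nn w" .
  have 1: "nn (T w) = a * ((b / a) * nn w) + (1 - 2 * a) * nn (R w)" using star[of w] s by simp
  have "a * ((b / a) * nn w) = b * nn w" using a0 by simp
  then have 1: "nn (T w) = b * nn w - b * nn (R w)" using 1 unfolding b_def by (simp add: algebra_simps)
  have "nn (T w) = b^2 * nn w + b^2 * nn (R w) - 2 * b * b * nn (R w)"
    using nn_lin2[of b w "- b" "R w"] Tw Re_proj(1)[OF fZ, of w] by simp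
  then have "b * (1 - b) * (nn w - nn (R w)) = 0" using 1 by (simp add: algebra_simps power2_eq_square)
  moreover have "b * (1 - b) \<noteq> 0" using a_gt a_ne unfolding b_def by simp
  ultimately have e: "nn w = nn (R w)" by simp
  have "nn (w - R w) = nn w - nn (R w)"
    using nn_diff[of w "R w"] Re_proj(1)[OF fZ, of w] by simp
  then have "nn (w - R w) = 0" using e by simp
  then have "w - R w = 0" using nn_eq0 by blast
  then have wR: "R w = w" by simp
  then have "w \<in> Z" using orthproj_in[OF fZ, of w] by simp
  moreover have "T w = 0" using Tw wR by simp
  ultimately show ?thesis by simp
qed

lemma dim_ZV: "cdim Z = cdim V"
proof -
  define D where "D = (\<lambda>x. P x - Q x)"
  have cD: "clin D" unfolding D_def clin_def
    by (simp add: orthproj_add[OF fX] orthproj_add[OF fY] orthproj_scaleC[OF fX] orthproj_scaleC[OF fY]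
        cvs.scale_right_diff_distrib)
  have a0: "a \<noteq> 0" using a_gt by simp
  have s1: "0 < (2 * a - 1) / a" "(2 * a - 1) / a < 2" using a_gt by (auto simp: field_simps)
  have s2: "0 < 1 / a" "1 / a < 2" using a_gt by (auto simp: field_simps)
  have W1: "P z + Q z = ((2 * a - 1) / a) *\<^sub>R z" if "z \<in> Z" "T z = 0" for z
  proof -
    have "0 = a *\<^sub>R (P z + Q z) + (1 - 2 * a) *\<^sub>R z" using ident[of z] that orthproj_id[OF fZ] by simp
    then have "a *\<^sub>R (P z + Q z) = (2 * a - 1) *\<^sub>R z" by (simp add: algebra_simps)
    then have "(1/a) *\<^sub>R (a *\<^sub>R (P z + Q z)) = (1/a) *\<^sub>R ((2 * a - 1) *\<^sub>R z)" by simp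
    then show ?thesis using a0 by simp
  qed
  have W2: "P v + Q v = (1 / a) *\<^sub>R v" if "v \<in> V" "R v = 0" for v
  proof -
    have "v = a *\<^sub>R (P v + Q v)" using ident[of v] that orthproj_id[OF fV] by simp
    then have "(1/a) *\<^sub>R v = (1/a) *\<^sub>R (a *\<^sub>R (P v + Q v))" by simp
    then show ?thesis using a0 by simp
  qed
  have "cdim Z \<le> cdim V"
  proof (rule pair_le[OF fV fZ cD])
    fix x assume x: "x \<in> Z" "T x = 0"
    have "P (D x) + Q (D x) = (2 - (2 * a - 1) / a) *\<^sub>R D x" unfolding D_def by (rule P_proj_coef[OF W1[OF x]])
    also have "2 - (2 * a - 1) / a = 1 / a" using a0 by (simp add: field_simps)
    finally show "D x \<in> V \<and> R (D x) = 0" by (rule eig1)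
    show "D x = 0 \<Longrightarrow> x = 0" using PQ_inj[OF W1[OF x] _ s1] D_def by simp
  qed
  moreover have "cdim V \<le> cdim Z"
  proof (rule pair_le[OF fZ fV cD])
    fix x assume x: "x \<in> V" "R x = 0"
    have "P (D x) + Q (D x) = (2 - 1 / a) *\<^sub>R D x" unfolding D_def by (rule P_proj_coef[OF W2[OF x]])
    also have "2 - 1 / a = (2 * a - 1) / a" using a0 by (simp add: field_simps)
    finally show "D x \<in> Z \<and> T (D x) = 0" by (rule eig2)
    show "D x = 0 \<Longrightarrow> x = 0" using PQ_inj[OF W2[OF x] _ s2] D_def by simp
  qed
  ultimately show ?thesis by simp
qed


lemma dim_XY: "cdim X = cdim Y"
proof -
  have "cdim X \<le> cdim Y"
    by (rule dim_inj_le[OF fX fY clin_orthproj[OF fY] orthproj_in[OF fY] XY_inj])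
  moreover interpret s: proj4 Y X Z V a
    using fX fY fZ fV a_gt a_ne ident by unfold_locales (auto simp: add.commute)
  have "cdim Y \<le> cdim X"
    by (rule dim_inj_le[OF fY fX clin_orthproj[OF fX] orthproj_in[OF fX] s.XY_inj])
  ultimately show ?thesis by simp
qed

lemma dim_XZ: "cdim Z = cdim X"
proof (cases "a < 1")
  case True
  have VX: "v = 0" if v: "v \<in> V" and p: "P v = 0" for v
  proof -
    have "nn v = a * nn (Q v) + (1 - 2 * a) * nn (R v)"
      using star[of v] orthproj_id[OF fV v] p by (simp add: nn_def)
    moreover have "nn (Q v) \<le> nn v" by (rule nn_proj_le[OF fY])
    moreover have "0 \<le> nn (R v)" by (rule nn_ge0)
    moreover have "a * nn (Q v) \<le> a * nn v" using mult_left_mono[OF \<open>nn (Q v) \<le> nn v\<close>] a_gt by simp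
    moreover have "(1 - 2 * a) * nn (R v) \<le> 0" using mult_nonpos_nonneg[OF _ \<open>0 \<le> nn (R v)\<close>, of "1 - 2 * a"] a_gt by simp
    ultimately have "(1 - a) * nn v \<le> 0" by (simp add: algebra_simps)
    then have "nn v \<le> 0" using True by (simp add: mult_le_0_iff)
    then have "nn v = 0" using nn_ge0[of v] by simp
    then show ?thesis using nn_eq0 by blast
  qed
  have XV: "x = 0" if x: "x \<in> X" and t: "T x = 0" for x
  proof -
    have "0 = a * (nn x + nn (Q x)) + (1 - 2 * a) * nn (R x)"
      using star[of x] orthproj_id[OF fX x] t by (simp add: nn_def)
    moreover have "nn (R x) \<le> nn x" by (rule nn_proj_le[OF fZ])
    moreover have "0 \<le> nn (Q x)" by (rule nn_ge0)
    moreover have "(1 - 2 * a) * nn (R x) \<ge> (1 - 2 * a) * nn x" using mult_left_mono_neg[OF \<open>nn (R x) \<le> nn x\<close>, of "1 - 2 * a"] a_gt by simp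
    moreover have "a * nn (Q x) \<ge> 0" using \<open>0 \<le> nn (Q x)\<close> a_gt by simp
    ultimately have "(1 - a) * nn x \<le> 0" by (simp add: algebra_simps)
    then have "nn x \<le> 0" using True by (simp add: mult_le_0_iff)
    then have "nn x = 0" using nn_ge0[of x] by simp
    then show ?thesis using nn_eq0 by blast
  qed
  have "cdim V \<le> cdim X" by (rule dim_inj_le[OF fV fX clin_orthproj[OF fX] orthproj_in[OF fX] VX])
  moreover have "cdim X \<le> cdim V" by (rule dim_inj_le[OF fX fV clin_orthproj[OF fV] orthproj_in[OF fV] XV])
  ultimately show ?thesis using dim_ZV by simp
next
  case False
  then have a1: "a > 1" using a_ne by simp
  have ZX: "z = 0" if z: "z \<in> Z" and p: "P z = 0" for z
  proof -
    have "nn (T z) = a * nn (Q z) + (1 - 2 * a) * nn z"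
      using star[of z] orthproj_id[OF fZ z] p by (simp add: nn_def)
    moreover have "nn (Q z) \<le> nn z" by (rule nn_proj_le[OF fY])
    moreover have "0 \<le> nn (T z)" by (rule nn_ge0)
    moreover have "a * nn (Q z) \<le> a * nn z" using mult_left_mono[OF \<open>nn (Q z) \<le> nn z\<close>] a_gt by simp
    ultimately have "(a - 1) * nn z \<le> 0" by (simp add: algebra_simps)
    then have "nn z \<le> 0" using a1 by (simp add: mult_le_0_iff)
    then have "nn z = 0" using nn_ge0[of z] by simp
    then show ?thesis using nn_eq0 by blast
  qed
  have XZ: "x = 0" if x: "x \<in> X" and r: "R x = 0" for x
  proof -
    have "nn (T x) = a * (nn x + nn (Q x))"
      using star[of x] orthproj_id[OF fX x] r by (simp add: nn_def)
    moreover have "nn (T x) \<le> nn x" by (rule nn_proj_le[OF fV])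
    moreover have "0 \<le> nn (Q x)" by (rule nn_ge0)
    moreover have "a * nn (Q x) \<ge> 0" using \<open>0 \<le> nn (Q x)\<close> a_gt by simp
    ultimately have "(a - 1) * nn x \<le> 0" by (simp add: algebra_simps)
    then have "nn x \<le> 0" using a1 by (simp add: mult_le_0_iff)
    then have "nn x = 0" using nn_ge0[of x] by simp
    then show ?thesis using nn_eq0 by blast
  qed
  have "cdim Z \<le> cdim X" by (rule dim_inj_le[OF fZ fX clin_orthproj[OF fX] orthproj_in[OF fX] ZX])
  moreover have "cdim X \<le> cdim Z" by (rule dim_inj_le[OF fX fZ clin_orthproj[OF fZ] orthproj_in[OF fZ] XZ])
  ultimately show ?thesis by simp
qed

end

lemma S_a_proj4:
  assumes "fd_subspace X" "fd_subspace Y" "a > 1/2" "a \<noteq> 1" "Z \<in> S_a a X Y"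
  shows "cdim X = cdim Y \<and> cdim Z = cdim X"
proof -
  define Tf where "Tf = (\<lambda>x. complex_of_real a *\<^sub>C (orthproj X x + orthproj Y x)
                        + complex_of_real (1 - 2 * a) *\<^sub>C orthproj Z x)"
  have fZ: "fd_subspace Z" and fr: "fr_projection Tf" using assms(5) unfolding S_a_def Tf_def by auto
  have idem: "\<And>x. Tf (Tf x) = Tf x" and adj: "\<And>x y. cinner (Tf x) y = cinner x (Tf y)"
    and fV: "fd_subspace (range Tf)"
    using fr unfolding fr_projection_def by (auto simp: fun_eq_iff)
  have TV: "orthproj (range Tf) x = Tf x" for x
  proof (rule orthproj_char[OF fV])
    show "Tf x \<in> range Tf" by simp
    show "\<forall>y\<in>range Tf. cinner y (x - Tf x) = 0"
    proof
      fix y assume "y \<in> range Tf"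
      then obtain u where u: "y = Tf u" by blast
      have "cinner (Tf u) (x - Tf x) = cinner (Tf u) x - cinner (Tf u) (Tf x)" by (rule cinner_diff_right)
      also have "\<dots> = cinner u (Tf x) - cinner u (Tf (Tf x))" by (simp add: adj)
      also have "\<dots> = 0" by (simp add: idem)
      finally show "cinner y (x - Tf x) = 0" using u by simp
    qed
  qed
  have ident: "orthproj (range Tf) x = a *\<^sub>R (orthproj X x + orthproj Y x) + (1 - 2 * a) *\<^sub>R orthproj Z x" for x
  proof -
    have "Tf x = a *\<^sub>R (orthproj X x + orthproj Y x) + (1 - 2 * a) *\<^sub>R orthproj Z x"
      unfolding Tf_def by (simp only: scaleR_scaleC)
    then show ?thesis using TV[of x] by simp
  qed
  have pr: "proj4 X Y Z (range Tf) a"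
    unfolding proj4_def using assms(1-4) fZ fV ident by blast
  show ?thesis using proj4.dim_XY[OF pr] proj4.dim_XZ[OF pr] by simp
qed

theorem corollary2p5:
  fixes X Y :: "'a::{complex_inner, complete_space} set" and a :: real
  assumes "a > 1/2" and "a \<noteq> 1"
    and "fd_subspace X" and "fd_subspace Y"
    and "S_a a X Y \<noteq> {}"
  shows "\<exists>k::nat. (fd_subspace (UNIV::'a set) \<longrightarrow> k \<le> cdim (UNIV::'a set))
           \<and> cdim X = k \<and> cdim Y = k \<and> (\<forall>Z\<in>S_a a X Y. cdim Z = k)"
proof -
  obtain Z0 where "Z0 \<in> S_a a X Y" using assms(5) by blast
  then have XY: "cdim X = cdim Y" using S_a_proj4[OF assms(3,4,1,2)] by blast
  have Z: "\<forall>Z\<in>S_a a X Y. cdim Z = cdim X" using S_a_proj4[OF assms(3,4,1,2)] by blast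
  have U: "fd_subspace (UNIV::'a set) \<longrightarrow> cdim X \<le> cdim (UNIV::'a set)"
  proof
    assume u: "fd_subspace (UNIV::'a set)"
    show "cdim X \<le> cdim (UNIV::'a set)"
      by (rule dim_inj_le[OF assms(3) u, of id]) (auto simp: clin_def)
  qed
  show ?thesis
    apply (rule exI[of _ "cdim X"])
    using XY Z U by simp
qed

end
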